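(* Let $d\ge 2$ and $\nu=\delta_1$ (the Dirac mass at $1$). Then, in the continuous greedy paths model driven by $\nu$, $\mathbb{E}S<+\infty$.
   Context: Let $\xi$ be a Poisson point process on $\mathbb{R}^d\times(0,+\infty)$ with intensity the product of Lebesgue measure on $\mathbb{R}^d$ and the finite measure $\nu$, and let $\Xi$ be its projection on $\mathbb{R}^d$. For $x\in\Xi$, $r(x)$ denotes the (a.s. unique) positive real with $(x,r(x))\in\xi$; for $x\notin\Xi$, $r(x)=0$. A path is a finite sequence $\pi=(x_0,\dots,x_n)$ of distinct points of $\mathbb{R}^d$; its length $|\pi|=\sum_{i=0}^{n-1}\|x_{i+1}-x_i\|$ (Euclidean norm), and its weight $A(\pi)=\sum_{i=0}^n r(x_i)$. Define $S=\sup\{A(\pi)/|\pi|\}$, the supremum over all paths with $x_0=0$ and $|\pi|>0$ (working on the a.s. event $0\notin\Xi$). *)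

theory Defs
  imports "HOL-Analysis.Analysis" "HOL-Probability.Probability"
begin

definition poisson_point_process ::
  "'b measure \<Rightarrow> ('b \<Rightarrow> 'p set) \<Rightarrow> 'p measure \<Rightarrow> bool" where
  "poisson_point_process M Xi mu \<longleftrightarrow>
     prob_space M \<and>
     (\<forall>B \<in> sets mu. emeasure mu B < \<infinity> \<longrightarrow>
        (AE \<omega> in M. finite (Xi \<omega> \<inter> B)) \<and>
        (\<lambda>\<omega>. card (Xi \<omega> \<inter> B)) \<in> measurable M (count_space UNIV) \<and>
        (\<forall>k::nat. measure M {\<omega> \<in> space M. card (Xi \<omega> \<inter> B) = k}
            = (measure mu B) ^ k / fact k * exp (- measure mu B))) \<and>
     (\<forall>(I::nat set) (B::nat \<Rightarrow> 'p set). finite I \<longrightarrow>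
        (\<forall>i\<in>I. B i \<in> sets mu \<and> emeasure mu (B i) < \<infinity>) \<longrightarrow>
        disjoint_family_on B I \<longrightarrow>
        prob_space.indep_vars M (\<lambda>_. count_space UNIV)
           (\<lambda>i \<omega>. card (Xi \<omega> \<inter> B i)) I)"

text \<open>Greedy paths model.  xi is the (marked) point set in R^d x (0,inf).\<close>

definition mark :: "('a \<times> real) set \<Rightarrow> 'a \<Rightarrow> real" where
  "mark xi x = (if \<exists>t. (x, t) \<in> xi then (SOME t. (x, t) \<in> xi) else 0)"

definition path_length :: "'a::real_normed_vector list \<Rightarrow> real" where
  "path_length p = sum_list (map (\<lambda>(x, y). norm (y - x)) (zip p (tl p)))"

definition path_weight :: "('a \<times> real) set \<Rightarrow> 'a list \<Rightarrow> real" where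
  "path_weight xi p = sum_list (map (mark xi) p)"

definition origin_paths :: "'a::real_normed_vector list set" where
  "origin_paths = {p. p \<noteq> [] \<and> distinct p \<and> hd p = 0 \<and> path_length p > 0}"

definition greedy_S :: "('a::real_normed_vector \<times> real) set \<Rightarrow> ennreal" where
  "greedy_S xi = (SUP p \<in> origin_paths. ennreal (path_weight xi p / path_length p))"

end

theory Submission
  imports Defs
begin


lemma path_length_Nil[simp]: "path_length [] = 0"
  by (simp add: path_length_def)
lemma path_length_single[simp]: "path_length [x] = 0"
  by (simp add: path_length_def)
lemma path_length_Cons2[simp]: "path_length (x # y # ys) = norm (y - x) + path_length (y # ys)"
  by (simp add: path_length_def)

lemma path_length_nonneg: "path_length xs \<ge> 0"
  unfolding path_length_def by (induction xs rule: induct_list012) auto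

lemma path_length_skip:
  "path_length (x # ys) \<le> norm (y - x) + path_length (y # ys)"
proof (cases ys)
  case Nil then show ?thesis by simp
next
  case (Cons z zs)
  have "norm (z - x) \<le> norm (y - x) + norm (z - y)"
    using norm_triangle_ineq[of "y - x" "z - y"] by simp
  then show ?thesis using Cons by simp
qed

lemma path_length_filter:
  "path_length (x # filter P xs) \<le> path_length (x # xs)"
proof (induction xs arbitrary: x)
  case Nil then show ?case by simp
next
  case (Cons y ys)
  show ?case
  proof (cases "P y")
    case True
    then show ?thesis using Cons[of y] by simp
  next
    case False
    then have "path_length (x # filter P (y # ys)) = path_length (x # filter P ys)" by simp
    also have "\<dots> \<le> path_length (x # ys)" by (rule Cons)
    also have "\<dots> \<le> norm (y - x) + path_length (y # ys)" by (rule path_length_skip)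
    finally show ?thesis by simp
  qed
qed

definition fv :: "real \<Rightarrow> real ^ 'd \<Rightarrow> int ^ 'd" where
  "fv K y = (\<chi> j. \<lfloor>K * y $ j\<rfloor>)"

definition stepset :: "(int ^ 'd) set" where
  "stepset = {s. \<forall>j. \<bar>s $ j\<bar> \<le> 1}"

definition positions :: "(int ^ 'd) list \<Rightarrow> (int ^ 'd) set" where
  "positions w = (\<lambda>t. sum_list (take t w)) ` {..length w}"

lemma walk_exists:
  fixes \<Delta> :: "int ^ 'd"
  shows "(\<forall>j. \<bar>\<Delta> $ j\<bar> \<le> int m) \<Longrightarrow> \<exists>w. length w = m \<and> set w \<subseteq> stepset \<and> sum_list w = \<Delta>"
proof (induction m arbitrary: \<Delta>)
  case 0
  then have "\<Delta> = 0" by (simp add: vec_eq_iff)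
  then show ?case by auto
next
  case (Suc m)
  define s :: "int ^ 'd" where "s = (\<chi> j. sgn (\<Delta> $ j))"
  have "\<forall>j. \<bar>(\<Delta> - s) $ j\<bar> \<le> int m"
  proof
    fix j
    have "\<bar>\<Delta> $ j\<bar> \<le> int (Suc m)" using Suc.prems by blast
    then have "\<bar>\<Delta> $ j\<bar> \<le> int m + 1" by simp
    then show "\<bar>(\<Delta> - s) $ j\<bar> \<le> int m"
      by (auto simp: s_def sgn_if)
  qed
  then obtain w where w: "length w = m" "set w \<subseteq> stepset" "sum_list w = \<Delta> - s"
    using Suc.IH by blast
  have "s \<in> stepset" by (auto simp: stepset_def s_def sgn_if)
  then show ?case using w by (intro exI[of _ "s # w"]) auto
qed

lemma floor_diff_le:
  fixes a b :: real
  shows "\<bar>\<lfloor>a\<rfloor> - \<lfloor>b\<rfloor>\<bar> \<le> \<lceil>\<bar>a - b\<bar>\<rceil>"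
proof -
  have fa: "real_of_int \<lfloor>a\<rfloor> \<le> a" "a < real_of_int \<lfloor>a\<rfloor> + 1" by linarith+
  have fb: "real_of_int \<lfloor>b\<rfloor> \<le> b" "b < real_of_int \<lfloor>b\<rfloor> + 1" by linarith+
  have c: "\<bar>a - b\<bar> \<le> real_of_int \<lceil>\<bar>a - b\<bar>\<rceil>" by (rule le_of_int_ceiling)
  have "real_of_int (\<lfloor>a\<rfloor> - \<lfloor>b\<rfloor>) < real_of_int (\<lceil>\<bar>a - b\<bar>\<rceil> + 1)"
    unfolding of_int_diff of_int_add using fa fb c abs_ge_self[of "a-b"] by linarith
  then have 1: "\<lfloor>a\<rfloor> - \<lfloor>b\<rfloor> < \<lceil>\<bar>a - b\<bar>\<rceil> + 1" by (simp only: of_int_less_iff)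
  have "real_of_int (\<lfloor>b\<rfloor> - \<lfloor>a\<rfloor>) < real_of_int (\<lceil>\<bar>a - b\<bar>\<rceil> + 1)"
    unfolding of_int_diff of_int_add using fa fb c abs_ge_minus_self[of "a-b"] by linarith
  then have 2: "\<lfloor>b\<rfloor> - \<lfloor>a\<rfloor> < \<lceil>\<bar>a - b\<bar>\<rceil> + 1" by (simp only: of_int_less_iff)
  from 1 2 show ?thesis by linarith
qed

lemma fv_diff:
  assumes "K > 0"
  shows "\<bar>(fv K y - fv K z) $ j\<bar> \<le> \<lceil>K * norm (y - z)\<rceil>"
proof -
  have "\<bar>K * y $ j - K * z $ j\<bar> = K * \<bar>(y - z) $ j\<bar>"
    using assms by (simp add: abs_mult right_diff_distrib[symmetric])
  also have "\<dots> \<le> K * norm (y - z)"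
    using assms component_le_norm_cart[of "y - z" j] by (intro mult_left_mono) auto
  finally have "\<bar>K * y $ j - K * z $ j\<bar> \<le> K * norm (y - z)" .
  then have "\<lceil>\<bar>K * y $ j - K * z $ j\<bar>\<rceil> \<le> \<lceil>K * norm (y - z)\<rceil>" by (rule ceiling_mono)
  moreover have "\<bar>(fv K y - fv K z) $ j\<bar> \<le> \<lceil>\<bar>K * y $ j - K * z $ j\<bar>\<rceil>"
    unfolding fv_def using floor_diff_le by simp
  ultimately show ?thesis by linarith
qed

lemma positions_append:
  "positions w1 \<union> (\<lambda>p. sum_list w1 + p) ` positions w2 \<subseteq> positions (w1 @ w2)"
proof -
  have "positions w1 \<subseteq> positions (w1 @ w2)"
  proof
    fix q assume "q \<in> positions w1"
    then obtain t where t: "t \<le> length w1" "q = sum_list (take t w1)"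
      unfolding positions_def by auto
    then have "q = sum_list (take t (w1 @ w2))" by simp
    moreover have "t \<in> {..length (w1 @ w2)}" using t by simp
    ultimately show "q \<in> positions (w1 @ w2)" unfolding positions_def by (rule image_eqI)
  qed
  moreover have "(\<lambda>p. sum_list w1 + p) ` positions w2 \<subseteq> positions (w1 @ w2)"
  proof
    fix q assume "q \<in> (\<lambda>p. sum_list w1 + p) ` positions w2"
    then obtain t where t: "t \<le> length w2" "q = sum_list w1 + sum_list (take t w2)"
      unfolding positions_def by auto
    then have "q = sum_list (take (length w1 + t) (w1 @ w2))" by simp
    moreover have "length w1 + t \<le> length (w1 @ w2)" using t by simp
    ultimately show "q \<in> positions (w1 @ w2)" unfolding positions_def by blast
  qed
  ultimately show ?thesis by blast
qed

lemma walk_points: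
  fixes z :: "real ^ 'd" and ys :: "(real ^ 'd) list"
  assumes "K > 0"
  shows "\<exists>w. set w \<subseteq> stepset \<and> real (length w) \<le> K * path_length (z # ys) + length ys
            \<and> (\<forall>y\<in>set ys. fv K y - fv K z \<in> positions w)"
  using assms
proof (induction ys arbitrary: z)
  case Nil
  then show ?case by (intro exI[of _ "[]"]) auto
next
  case (Cons y ys)
  define m where "m = nat \<lceil>K * norm (y - z)\<rceil>"
  have "\<forall>j. \<bar>(fv K y - fv K z) $ j\<bar> \<le> int m"
  proof
    fix j
    have "\<lceil>K * norm (y - z)\<rceil> \<le> int m" unfolding m_def by simp
    then show "\<bar>(fv K y - fv K z) $ j\<bar> \<le> int m" using fv_diff[OF Cons.prems, of y z j] by linarith
  qed
  then obtain w1 where w1: "length w1 = m" "set w1 \<subseteq> stepset" "sum_list w1 = fv K y - fv K z"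
    using walk_exists by blast
  obtain w2 where w2: "set w2 \<subseteq> stepset" "real (length w2) \<le> K * path_length (y # ys) + length ys"
    "\<forall>y'\<in>set ys. fv K y' - fv K y \<in> positions w2"
    using Cons.IH[OF Cons.prems] by blast
  have m_le: "real m \<le> K * norm (y - z) + 1"
  proof -
    have "0 \<le> K * norm (y - z)" using Cons.prems by simp
    then have "0 \<le> \<lceil>K * norm (y - z)\<rceil>" by simp
    then have "real m = real_of_int \<lceil>K * norm (y - z)\<rceil>" unfolding m_def by simp
    also have "\<dots> \<le> K * norm (y - z) + 1" by linarith
    finally show ?thesis .
  qed
  have "real (length (w1 @ w2)) \<le> K * path_length (z # y # ys) + length (y # ys)"
    using w1(1) w2(2) m_le by (simp add: distrib_left)
  moreover have "set (w1 @ w2) \<subseteq> stepset" using w1 w2 by auto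
  moreover have "\<forall>y'\<in>set (y # ys). fv K y' - fv K z \<in> positions (w1 @ w2)"
  proof
    fix y' assume "y' \<in> set (y # ys)"
    then consider "y' = y" | "y' \<in> set ys" by auto
    then show "fv K y' - fv K z \<in> positions (w1 @ w2)"
    proof cases
      case 1
      have "sum_list w1 \<in> positions w1" unfolding positions_def
        by (auto intro!: image_eqI[of _ _ "length w1"])
      then show ?thesis using 1 w1(3) positions_append[of w1 w2] by auto
    next
      case 2
      then have "fv K y' - fv K y \<in> positions w2" using w2(3) by auto
      then have "sum_list w1 + (fv K y' - fv K y) \<in> positions (w1 @ w2)"
        using positions_append[of w1 w2] by auto
      then show ?thesis using w1(3) by (simp add: algebra_simps)
    qed
  qed
  ultimately show ?case by blast
qed



definition qbox :: "real \<Rightarrow> int ^ 'd \<Rightarrow> (real ^ 'd) set" where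
  "qbox K p = cbox (\<chi> j. real_of_int (p $ j) / K) (\<chi> j. (real_of_int (p $ j) + 1) / K)"

lemma in_qbox:
  assumes "K > 0" shows "y \<in> qbox K (fv K y)"
  unfolding qbox_def mem_box_cart fv_def using assms
  by (auto simp: field_simps) linarith+

lemma emeasure_qbox:
  assumes "K > 0"
  shows "emeasure lborel (qbox K (p :: int ^ 'd)) = ennreal ((1 / K) ^ CARD('d))"
proof -
  have "emeasure lborel (qbox K p) =
     ennreal (measure lborel (cbox (\<chi> j. real_of_int (p $ j) / K) (\<chi> j. (real_of_int (p $ j) + 1) / K)))"
    unfolding qbox_def using emeasure_lborel_cbox_finite by (intro emeasure_eq_ennreal_measure) (simp add: less_top) 
  also have "measure lborel (cbox (\<chi> j. real_of_int (p $ j) / K) (\<chi> j. (real_of_int (p $ j) + 1) / K))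
      = (\<Prod>i\<in>UNIV. (real_of_int (p $ i) + 1) / K - real_of_int (p $ i) / K)"
  proof -
    have "(\<chi> j. real_of_int (p $ j) / K) \<in> cbox (\<chi> j. real_of_int (p $ j) / K) (\<chi> j. (real_of_int (p $ j) + 1) / K)"
      unfolding mem_box_cart using assms by (auto simp: divide_right_mono)
    then have "cbox (\<chi> j. real_of_int (p $ j) / K) (\<chi> j. (real_of_int (p $ j) + 1) / K) \<noteq> {}" by blast
    from content_cbox_cart[OF this] show ?thesis by simp
  qed
  also have "\<dots> = (\<Prod>i\<in>(UNIV::'d set). 1 / K)"
    using assms by (intro prod.cong) (auto simp: field_simps)
  also have "\<dots> = (1 / K) ^ CARD('d)" by simp
  finally show ?thesis .
qed

definition region :: "real \<Rightarrow> (int ^ 'd) list \<Rightarrow> ((real ^ 'd) \<times> real) set" where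
  "region K w = (\<Union>p\<in>positions w. qbox K p) \<times> UNIV"

lemma finite_positions: "finite (positions w)"
  unfolding positions_def by simp

lemma card_positions: "card (positions w) \<le> length w + 1"
  unfolding positions_def using card_image_le[of "{..length w}" "\<lambda>t. sum_list (take t w)"] by simp

lemma sigma_finite_return: "sigma_finite_measure (return borel (1::real))"
proof -
  interpret prob_space "return borel (1::real)" by (rule prob_space_return) simp
  show ?thesis by unfold_locales
qed

lemma region_sets: "region K w \<in> sets ((lborel :: (real ^ 'd) measure) \<Otimes>\<^sub>M return borel (1::real))"
proof -
  have "(\<Union>p\<in>positions w. qbox K p) \<in> sets (lborel :: (real ^ 'd) measure)"
    using finite_positions by (auto simp: qbox_def intro!: sets.finite_UN borel_closed)
  moreover have "(UNIV :: real set) \<in> sets (return borel (1::real))" by simp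
  ultimately show ?thesis unfolding region_def by (rule pair_measureI)
qed

lemma emeasure_region:
  assumes "K > 0"
  shows "emeasure ((lborel :: (real ^ 'd) measure) \<Otimes>\<^sub>M return borel (1::real)) (region K w)
     \<le> ennreal (real (length w + 1) * (1 / K) ^ CARD('d))"
proof -
  let ?U = "(\<Union>p\<in>positions w. qbox K p)"
  have U: "?U \<in> sets (lborel :: (real ^ 'd) measure)"
    using finite_positions by (auto simp: qbox_def intro!: sets.finite_UN borel_closed)
  have "emeasure ((lborel :: (real ^ 'd) measure) \<Otimes>\<^sub>M return borel (1::real)) (region K w)
      = emeasure lborel ?U * emeasure (return borel (1::real)) UNIV"
    unfolding region_def using U
    by (intro sigma_finite_measure.emeasure_pair_measure_Times sigma_finite_return) auto
  also have "\<dots> = emeasure lborel ?U" by simp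
  also have "\<dots> \<le> (\<Sum>p\<in>positions w. emeasure lborel (qbox K p))"
    using finite_positions by (intro emeasure_subadditive_finite) (auto simp: qbox_def intro!: borel_closed)
  also have "\<dots> = (\<Sum>p\<in>positions w. ennreal ((1 / K) ^ CARD('d)))"
    using emeasure_qbox[OF assms] by (intro sum.cong) auto
  also have "\<dots> = ennreal (real (card (positions w)) * (1 / K) ^ CARD('d))"
    using assms by (simp add: ennreal_of_nat_eq_real_of_nat ennreal_mult)
  also have "\<dots> \<le> ennreal (real (length w + 1) * (1 / K) ^ CARD('d))"
    using card_positions[of w] assms by (intro ennreal_leI mult_right_mono) auto
  finally show ?thesis .
qed

lemma poisson_tail:
  assumes P: "poisson_point_process M Xi mu" and B: "B \<in> sets mu" "emeasure mu B < \<infinity>"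
  shows "measure M {\<omega>\<in>space M. n \<le> card (Xi \<omega> \<inter> B)} \<le> (measure mu B) ^ n / fact n"
proof -
  define N where "N = (\<lambda>\<omega>. card (Xi \<omega> \<inter> B))"
  define m where "m = measure mu B"
  have PS: "prob_space M" using P unfolding poisson_point_process_def by blast
  interpret prob_space M by (rule PS)
  have meas: "N \<in> measurable M (count_space UNIV)"
    and dist: "\<And>k. measure M {\<omega> \<in> space M. N \<omega> = k} = m ^ k / fact k * exp (- m)"
    using P B unfolding poisson_point_process_def N_def m_def by blast+
  have m0: "m \<ge> 0" unfolding m_def by simp
  have Sk: "{\<omega> \<in> space M. N \<omega> = k} \<in> sets M" for k
  proof -
    have "{\<omega> \<in> space M. N \<omega> = k} = N -` {k} \<inter> space M" by auto
    then show ?thesis using measurable_sets[OF meas, of "{k}"] by simp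
  qed
  have lt: "{\<omega> \<in> space M. N \<omega> < n} = (\<Union>k\<in>{..<n}. {\<omega> \<in> space M. N \<omega> = k})" by auto
  have "measure M {\<omega> \<in> space M. N \<omega> < n} = (\<Sum>k\<in>{..<n}. measure M {\<omega> \<in> space M. N \<omega> = k})"
    unfolding lt using Sk by (intro measure_finite_Union) (auto simp: disjoint_family_on_def)
  also have "\<dots> = exp (- m) * (\<Sum>k<n. m ^ k / fact k)"
    by (simp add: dist sum_distrib_left mult.commute)
  finally have A: "measure M {\<omega> \<in> space M. N \<omega> < n} = exp (- m) * (\<Sum>k<n. m ^ k / fact k)" .
  have ltS: "{\<omega> \<in> space M. N \<omega> < n} \<in> sets M" unfolding lt using Sk by auto
  have ge: "{\<omega>\<in>space M. n \<le> N \<omega>} = space M - {\<omega> \<in> space M. N \<omega> < n}" by auto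
  obtain t where t: "\<bar>t\<bar> \<le> \<bar>m\<bar>" "exp m = (\<Sum>k<n. m ^ k / fact k) + exp t / fact n * m ^ n"
    using Maclaurin_exp_le[of m n] by blast
  have "measure M {\<omega>\<in>space M. n \<le> N \<omega>} = 1 - exp (- m) * (\<Sum>k<n. m ^ k / fact k)"
    unfolding ge using prob_compl[OF ltS] A by simp
  also have "\<dots> = exp (- m) * (exp m - (\<Sum>k<n. m ^ k / fact k))"
    by (simp add: algebra_simps exp_minus_inverse)
  also have "\<dots> = exp (- m) * (exp t / fact n * m ^ n)"
    using t(2) by simp
  also have "\<dots> = (exp (- m) * exp t) * (m ^ n / fact n)" by simp
  also have "\<dots> = exp (t - m) * (m ^ n / fact n)" by (simp add: exp_add[symmetric])
  also have "\<dots> \<le> 1 * (m ^ n / fact n)"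
    using t(1) m0 by (intro mult_right_mono) auto
  finally show ?thesis unfolding N_def m_def by simp
qed



definition Dset :: "nat \<Rightarrow> (int ^ 'd) list set" where
  "Dset n = {w. set w \<subseteq> stepset \<and> length w = 2 * n}"

lemma sum_list_indicator_filter:
  "sum_list (map (\<lambda>x. if P x then 1 else 0) xs) = real (length (filter P xs))"
  by (induction xs) auto

lemma fv_zero: "fv K 0 = 0"
  unfolding fv_def by (simp add: vec_eq_iff)

lemma region_bounded:
  "\<exists>r::nat. region K w \<subseteq> cball 0 (real r) \<times> UNIV"
proof -
  have "bounded (\<Union>p\<in>positions w. qbox K p)"
    using finite_positions[of w] by (intro bounded_UN) (auto simp: qbox_def)
  then obtain e x where e: "(\<Union>p\<in>positions w. qbox K p) \<subseteq> cball x e"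
    unfolding bounded_subset_cball by blast
  obtain r :: nat where r: "norm x + e \<le> real r" using real_arch_simple by blast
  have "cball x e \<subseteq> cball 0 (real r)"
  proof
    fix y assume "y \<in> cball x e"
    then have "norm (y - x) \<le> e" by (simp add: dist_norm norm_minus_commute)
    then have "norm y \<le> norm x + e" using norm_triangle_ineq[of x "y - x"] by simp
    then show "y \<in> cball 0 (real r)" using r by simp
  qed
  then show ?thesis using e unfolding region_def by blast
qed

lemma deterministic:
  fixes xi :: "((real ^ 'd) \<times> real) set"
  assumes K: "K > 0"
    and marks: "\<And>x t. (x, t) \<in> xi \<Longrightarrow> t \<le> 1"
    and fin: "\<And>r::nat. finite (xi \<inter> (cball 0 (real r) \<times> UNIV))"
    and p: "p \<in> origin_paths"
    and gt: "K < path_weight xi p / path_length p"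
  shows "\<exists>n w. w \<in> Dset (Suc n) \<and> Suc n \<le> card (xi \<inter> region K w)"
proof -
  define X where "X = fst ` xi"
  define ys where "ys = filter (\<lambda>x. x \<in> X) p"
  have pne: "p \<noteq> []" and pd: "distinct p" and p0: "hd p = 0" and Lpos: "path_length p > 0"
    using p unfolding origin_paths_def by auto
  have mark_le: "mark xi x \<le> (if x \<in> X then 1 else 0)" for x
  proof (cases "x \<in> X")
    case True
    then have ex: "\<exists>t. (x, t) \<in> xi" unfolding X_def by force
    then have "(x, SOME t. (x, t) \<in> xi) \<in> xi" by (rule someI_ex)
    then show ?thesis using True ex marks unfolding mark_def by auto
  next
    case False
    then have "\<not> (\<exists>t. (x, t) \<in> xi)" unfolding X_def by force
    then show ?thesis using False unfolding mark_def by auto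
  qed
  have W: "path_weight xi p \<le> real (length ys)"
  proof -
    have "path_weight xi p \<le> sum_list (map (\<lambda>x. if x \<in> X then 1 else 0) p)"
      unfolding path_weight_def by (intro sum_list_mono mark_le)
    then show ?thesis unfolding ys_def sum_list_indicator_filter .
  qed
  have KL: "K * path_length p < path_weight xi p"
    using gt Lpos by (simp add: pos_less_divide_eq mult.commute)
  have "0 < K * path_length p" using K Lpos by simp
  then have n0pos: "length ys > 0" using KL W by linarith
  then obtain n where n: "length ys = Suc n" by (cases "length ys") auto
  obtain p' where p': "p = 0 # p'" using pne p0 by (cases p) auto
  have L0: "path_length (0 # ys) \<le> path_length p"
  proof -
    have "path_length (0 # ys) \<le> path_length (0 # p)"
      unfolding ys_def by (rule path_length_filter)
    also have "path_length (0 # p) = path_length p" using p' by simp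
    finally show ?thesis .
  qed
  obtain w0 where w0: "set w0 \<subseteq> stepset" "real (length w0) \<le> K * path_length (0 # ys) + length ys"
    "\<forall>y\<in>set ys. fv K y - fv K 0 \<in> positions w0"
    using walk_points[OF K, of 0 ys] by blast
  have "K * path_length (0 # ys) \<le> K * path_length p" using L0 K by simp
  then have "real (length w0) \<le> real (2 * Suc n)" using w0(2) KL W n by simp
  then have len: "length w0 \<le> 2 * Suc n" by (simp only: of_nat_le_iff)
  define w where "w = w0 @ replicate (2 * Suc n - length w0) 0"
  have "(0 :: int ^ 'd) \<in> stepset" unfolding stepset_def by simp
  then have wD: "w \<in> Dset (Suc n)" using w0(1) len unfolding w_def Dset_def by auto
  have pos: "fv K y \<in> positions w" if "y \<in> set ys" for y
    using w0(3) that positions_append[of w0 "replicate (2 * Suc n - length w0) 0"]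
    unfolding w_def fv_zero by auto
  define f where "f = (\<lambda>y. (y, SOME t. (y, t) \<in> xi))"
  have "f ` set ys \<subseteq> xi \<inter> region K w"
  proof
    fix q assume "q \<in> f ` set ys"
    then obtain y where y: "y \<in> set ys" "q = f y" by auto
    then have "y \<in> X" unfolding ys_def by simp
    then have "\<exists>t. (y, t) \<in> xi" unfolding X_def by force
    then have "q \<in> xi" unfolding y(2) f_def by (rule someI_ex)
    moreover have "y \<in> qbox K (fv K y)" by (rule in_qbox[OF K])
    then have "q \<in> region K w" using pos[OF y(1)] unfolding region_def y(2) f_def by auto
    ultimately show "q \<in> xi \<inter> region K w" by blast
  qed
  moreover have "inj_on f (set ys)" unfolding f_def by (rule inj_onI) simp
  moreover obtain r :: nat where "region K w \<subseteq> cball 0 (real r) \<times> UNIV"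
    using region_bounded by blast
  then have "xi \<inter> region K w \<subseteq> xi \<inter> (cball 0 (real r) \<times> UNIV)" by blast
  then have "finite (xi \<inter> region K w)"
    using fin[of r] by (rule finite_subset)
  ultimately have "card (set ys) \<le> card (xi \<inter> region K w)"
    by (metis card_image card_mono)
  moreover have "card (set ys) = Suc n"
  proof -
    have "distinct ys" using pd by (simp add: ys_def)
    then show ?thesis using distinct_card[of ys] n by simp
  qed
  ultimately show ?thesis using wD by auto
qed



lemma stepset_fin: "finite (stepset :: (int ^ 'd) set)"
  and stepset_card: "card (stepset :: (int ^ 'd) set) \<le> 3 ^ CARD('d)"
proof -
  let ?P = "PiE (UNIV :: 'd set) (\<lambda>_. {-1..1::int})"
  have sub: "(stepset :: (int ^ 'd) set) \<subseteq> (\<lambda>f. \<chi> j. f j) ` ?P"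
  proof
    fix s :: "int ^ 'd" assume "s \<in> stepset"
    then have "(\<lambda>j. s $ j) \<in> ?P" unfolding stepset_def by (auto simp: PiE_iff abs_le_iff)
    moreover have "s = (\<chi> j. (\<lambda>j. s $ j) j)" by simp
    ultimately show "s \<in> (\<lambda>f. \<chi> j. f j) ` ?P" by blast
  qed
  have fP: "finite ?P" by (intro finite_PiE) auto
  then show "finite (stepset :: (int ^ 'd) set)" using sub by (meson finite_imageI finite_subset)
  have "card (stepset :: (int ^ 'd) set) \<le> card ((\<lambda>f. \<chi> j. f j) ` ?P)"
    using sub fP by (intro card_mono) auto
  also have "\<dots> \<le> card ?P" using fP by (rule card_image_le)
  also have "\<dots> = 3 ^ CARD('d)" by (simp add: card_PiE)
  finally show "card (stepset :: (int ^ 'd) set) \<le> 3 ^ CARD('d)" .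
qed

lemma Dset_fin: "finite (Dset n :: (int ^ 'd) list set)"
  unfolding Dset_def using stepset_fin by (rule finite_lists_length_eq)

lemma Dset_card: "real (card (Dset n :: (int ^ 'd) list set)) \<le> (9 ^ CARD('d)) ^ n"
proof -
  have "card (Dset n :: (int ^ 'd) list set) = card (stepset :: (int ^ 'd) set) ^ (2 * n)"
    unfolding Dset_def using stepset_fin by (rule card_lists_length_eq)
  also have "\<dots> \<le> (3 ^ CARD('d)) ^ (2 * n)" using stepset_card by (rule power_mono) simp
  also have "\<dots> = (9 ^ CARD('d)) ^ n"
  proof -
    have e1: "((3::nat) ^ CARD('d)) ^ (2 * n) = (((3::nat) ^ CARD('d)) ^ 2) ^ n" by (simp add: power_mult)
    have e2: "((3::nat) ^ CARD('d)) ^ 2 = (3 ^ 2) ^ CARD('d)" by (metis power_mult mult.commute)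
    show ?thesis unfolding e1 e2 by simp
  qed
  finally have "card (Dset n :: (int ^ 'd) list set) \<le> (9 ^ CARD('d)) ^ n" .
  then show ?thesis by (metis of_nat_le_iff of_nat_numeral of_nat_power)
qed

lemma pow_fact_le_exp: "real m ^ m / fact m \<le> exp (real m)"
proof -
  obtain t where t: "exp (real m) = (\<Sum>k<Suc m. real m ^ k / fact k) + exp t / fact (Suc m) * real m ^ Suc m"
    using Maclaurin_exp_le[of "real m" "Suc m"] by blast
  have "real m ^ m / fact m \<le> (\<Sum>k<Suc m. real m ^ k / fact k)"
    by (rule member_le_sum[where f = "\<lambda>k. real m ^ k / fact k"]) auto
  moreover have "0 \<le> exp t / fact (Suc m) * real m ^ Suc m" by simp
  ultimately show ?thesis using t by linarith
qed

lemma term_bound: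
  fixes K :: real
  assumes K: "K \<ge> 40" and m: "m \<ge> 1" and d: "CARD('d) \<ge> 2"
  shows "real (card (Dset m :: (int ^ 'd) list set)) * ((real (2 * m + 1) * (1 / K) ^ CARD('d)) ^ m / fact m)
      \<le> (729 / K\<^sup>2) ^ m"
proof -
  let ?d = "CARD('d)"
  define c where "c = (1 / K) ^ ?d"
  have c0: "c \<ge> 0" unfolding c_def using K by simp
  have "(real (2 * m + 1) * c) ^ m \<le> (3 * real m * c) ^ m"
    using m c0 by (intro power_mono mult_right_mono) auto
  moreover have "(3 * real m * c) ^ m = (3 * c) ^ m * real m ^ m"
    by (simp only: power_mult_distrib) (simp add: ac_simps)
  ultimately have "(real (2 * m + 1) * c) ^ m \<le> (3 * c) ^ m * real m ^ m" by simp
  then have "(real (2 * m + 1) * c) ^ m / fact m \<le> (3 * c) ^ m * real m ^ m / fact m"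
    by (rule divide_right_mono) simp
  then have A: "(real (2 * m + 1) * c) ^ m / fact m \<le> (3 * c) ^ m * (real m ^ m / fact m)"
    by simp
  have "(3 * c) ^ m * (real m ^ m / fact m) \<le> (3 * c) ^ m * exp (real m)"
    using c0 by (intro mult_left_mono pow_fact_le_exp) auto
  also have "exp (real m) = exp 1 ^ m" using exp_of_nat_mult[of m 1] by simp
  finally have B: "(real (2 * m + 1) * c) ^ m / fact m \<le> (3 * c * exp 1) ^ m"
    using A by (simp add: power_mult_distrib)
  have "real (card (Dset m :: (int ^ 'd) list set)) * ((real (2 * m + 1) * c) ^ m / fact m)
      \<le> (9 ^ ?d) ^ m * (3 * c * exp 1) ^ m"
    using Dset_card[of m] B c0 by (intro mult_mono) auto
  also have "\<dots> = (3 * exp 1 * (9 / K) ^ ?d) ^ m"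
  proof -
    have "(9 ^ ?d) ^ m * (3 * c * exp 1) ^ m = (9 ^ ?d * (3 * c * exp 1)) ^ m"
      by (simp only: power_mult_distrib)
    also have "9 ^ ?d * (3 * c * exp 1) = 3 * exp 1 * (9 ^ ?d * c)" by (simp add: ac_simps)
    also have "9 ^ ?d * c = (9 / K) ^ ?d" unfolding c_def
      by (simp only: power_mult_distrib[symmetric]) simp
    finally show ?thesis .
  qed
  also have "\<dots> \<le> (729 / K\<^sup>2) ^ m"
  proof (rule power_mono)
    have "(9 / K) ^ ?d \<le> (9 / K) ^ 2" using K d by (intro power_decreasing) auto
    then have "3 * exp 1 * (9 / K) ^ ?d \<le> 3 * 3 * (9 / K) ^ 2"
      using exp_le K by (intro mult_mono) auto
    then show "3 * exp 1 * (9 / K) ^ ?d \<le> 729 / K\<^sup>2" by (simp add: power_divide)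
    show "0 \<le> 3 * exp 1 * (9 / K) ^ ?d" using K by simp
  qed
  finally show ?thesis unfolding c_def .
qed



definition EK :: "'b measure \<Rightarrow> ('b \<Rightarrow> ((real ^ 'd) \<times> real) set) \<Rightarrow> real \<Rightarrow> 'b set" where
  "EK M Xi K = (\<Union>n. \<Union>w\<in>Dset (Suc n). {\<omega>\<in>space M. Suc n \<le> card (Xi \<omega> \<inter> region K w)})"

lemma region_fin:
  assumes "K > 0"
  shows "emeasure ((lborel :: (real ^ 'd) measure) \<Otimes>\<^sub>M return borel (1::real)) (region K w) < \<infinity>"
  using emeasure_region[OF assms, of w] by (rule le_less_trans) simp

lemma level_sets:
  fixes Xi :: "'b \<Rightarrow> ((real ^ 'd) \<times> real) set"
  assumes P: "poisson_point_process M Xi ((lborel :: (real ^ 'd) measure) \<Otimes>\<^sub>M return borel (1::real))"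
    and K: "K > 0"
  shows "{\<omega>\<in>space M. m \<le> card (Xi \<omega> \<inter> region K w)} \<in> sets M"
proof -
  have "(\<lambda>\<omega>. card (Xi \<omega> \<inter> region K w)) \<in> measurable M (count_space UNIV)"
    using P region_sets[of K w] region_fin[OF K, of w] unfolding poisson_point_process_def by blast
  then have "(\<lambda>\<omega>. card (Xi \<omega> \<inter> region K w)) -` {m..} \<inter> space M \<in> sets M"
    by (rule measurable_sets) simp
  moreover have "{\<omega>\<in>space M. m \<le> card (Xi \<omega> \<inter> region K w)} = (\<lambda>\<omega>. card (Xi \<omega> \<inter> region K w)) -` {m..} \<inter> space M"
    by auto
  ultimately show ?thesis by simp
qed

lemma EK_sets:
  fixes Xi :: "'b \<Rightarrow> ((real ^ 'd) \<times> real) set"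
  assumes P: "poisson_point_process M Xi ((lborel :: (real ^ 'd) measure) \<Otimes>\<^sub>M return borel (1::real))"
    and K: "K > 0"
  shows "EK M Xi K \<in> sets M"
  unfolding EK_def using level_sets[OF P K] Dset_fin
  by (intro sets.countable_UN sets.finite_UN) auto

lemma level_measure:
  fixes Xi :: "'b \<Rightarrow> ((real ^ 'd) \<times> real) set"
  assumes P: "poisson_point_process M Xi ((lborel :: (real ^ 'd) measure) \<Otimes>\<^sub>M return borel (1::real))"
    and K: "K > 0" and w: "w \<in> Dset m"
  shows "measure M {\<omega>\<in>space M. m \<le> card (Xi \<omega> \<inter> region K w)}
    \<le> (real (2 * m + 1) * (1 / K) ^ CARD('d)) ^ m / fact m"
proof -
  let ?mu = "(lborel :: (real ^ 'd) measure) \<Otimes>\<^sub>M return borel (1::real)"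
  have "measure M {\<omega>\<in>space M. m \<le> card (Xi \<omega> \<inter> region K w)} \<le> (measure ?mu (region K w)) ^ m / fact m"
    using poisson_tail[OF P region_sets region_fin[OF K]] by blast
  also have "\<dots> \<le> (real (2 * m + 1) * (1 / K) ^ CARD('d)) ^ m / fact m"
  proof (intro divide_right_mono power_mono)
    have "length w = 2 * m" using w unfolding Dset_def by simp
    then have "emeasure ?mu (region K w) \<le> ennreal (real (2 * m + 1) * (1 / K) ^ CARD('d))"
      using emeasure_region[OF K, of w] by simp
    then show "measure ?mu (region K w) \<le> real (2 * m + 1) * (1 / K) ^ CARD('d)"
      unfolding measure_def using K by (intro enn2real_leI) auto
  qed auto
  finally show ?thesis .
qed

lemma EK_bound:
  fixes Xi :: "'b \<Rightarrow> ((real ^ 'd) \<times> real) set"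
  assumes P: "poisson_point_process M Xi ((lborel :: (real ^ 'd) measure) \<Otimes>\<^sub>M return borel (1::real))"
    and K: "K \<ge> 1" and d: "CARD('d) \<ge> 2"
  shows "emeasure M (EK M Xi K) \<le> ennreal (1600 / K\<^sup>2)"
proof -
  have PS: "prob_space M" using P unfolding poisson_point_process_def by blast
  interpret prob_space M by (rule PS)
  show ?thesis
  proof (cases "K < 40")
    case True
    have "K\<^sup>2 \<le> 1600"
    proof -
      have "K * K \<le> 40 * 40" using True K by (intro mult_mono) auto
      then show ?thesis by (simp add: power2_eq_square)
    qed
    then have "1 \<le> 1600 / K\<^sup>2" using K by simp
    then have "ennreal 1 \<le> ennreal (1600 / K\<^sup>2)" by (rule ennreal_leI)
    then have e: "(1::ennreal) \<le> ennreal (1600 / K\<^sup>2)" by simp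
    show ?thesis by (rule order_trans[OF emeasure_le_1 e])
  next
    case False
    then have K40: "K \<ge> 40" by simp
    define q where "q = 729 / K\<^sup>2"
    have q0: "0 \<le> q" unfolding q_def by simp
    have "K\<^sup>2 \<ge> 40\<^sup>2" using K40 by (intro power_mono) auto
    moreover have pos: "K\<^sup>2 > 0" using K40 by simp
    ultimately have qh: "q \<le> 1 / 2" unfolding q_def by (simp add: pos_divide_le_eq[OF pos])
    define F where "F = (\<lambda>n. \<Union>w\<in>Dset (Suc n). {\<omega>\<in>space M. Suc n \<le> card (Xi \<omega> \<inter> region K w)})"
    have K0: "K > 0" using K by simp
    have Fsets: "F n \<in> sets M" for n
      unfolding F_def using level_sets[OF P K0] Dset_fin by (intro sets.finite_UN) auto
    have EKF: "EK M Xi K = (\<Union>n. F n)" unfolding EK_def F_def by simp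
    have Fb: "emeasure M (F n) \<le> ennreal (q ^ Suc n)" for n
    proof -
      let ?T = "(real (2 * Suc n + 1) * (1 / K) ^ CARD('d)) ^ Suc n / fact (Suc n)"
      have "emeasure M (F n) \<le> (\<Sum>w\<in>Dset (Suc n). emeasure M {\<omega>\<in>space M. Suc n \<le> card (Xi \<omega> \<inter> region K w)})"
        unfolding F_def using Dset_fin level_sets[OF P K0] by (intro emeasure_subadditive_finite) auto
      also have "\<dots> \<le> (\<Sum>w\<in>(Dset (Suc n) :: (int ^ 'd) list set). ennreal ?T)"
      proof (rule sum_mono)
        fix w assume w: "w \<in> (Dset (Suc n) :: (int ^ 'd) list set)"
        show "emeasure M {\<omega>\<in>space M. Suc n \<le> card (Xi \<omega> \<inter> region K w)} \<le> ennreal ?T"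
          unfolding emeasure_eq_measure using level_measure[OF P K0 w] by (rule ennreal_leI)
      qed
      also have "\<dots> = of_nat (card (Dset (Suc n) :: (int ^ 'd) list set)) * ennreal ?T"
        by (rule sum_constant)
      also have "\<dots> = ennreal (real (card (Dset (Suc n) :: (int ^ 'd) list set)) * ?T)"
      proof -
        have T0: "0 \<le> ?T" using K0 by simp
        show ?thesis by (subst ennreal_mult[OF _ T0]) (auto simp: ennreal_of_nat_eq_real_of_nat)
      qed
      also have "\<dots> \<le> ennreal (q ^ Suc n)"
        unfolding q_def using term_bound[OF K40 _ d, of "Suc n"] by (intro ennreal_leI) simp
      finally show ?thesis .
    qed
    have sums: "(\<lambda>n. q ^ Suc n) sums (q * (1 / (1 - q)))"
      using sums_mult[OF geometric_sums[of q], of q] q0 qh by simp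
    have "emeasure M (EK M Xi K) \<le> (\<Sum>n. emeasure M (F n))"
      unfolding EKF using Fsets by (intro emeasure_subadditive_countably) auto
    also have "\<dots> \<le> (\<Sum>n. ennreal (q ^ Suc n))"
      using Fb by (intro suminf_le) auto
    also have "\<dots> = ennreal (\<Sum>n. q ^ Suc n)"
      using sums q0 by (intro suminf_ennreal2) (auto simp: sums_iff)
    also have "(\<Sum>n. q ^ Suc n) = q * (1 / (1 - q))" using sums by (simp add: sums_iff)
    also have "\<dots> \<le> 2 * q"
    proof -
      have pq: "1 - q > 0" using qh by simp
      have "1 / (1 - q) \<le> 2" using qh by (simp add: pos_divide_le_eq[OF pq])
      then have "q * (1 / (1 - q)) \<le> q * 2" by (rule mult_left_mono[OF _ q0])
      then show ?thesis by (simp only: mult.commute[of 2 q])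
    qed
    also have "2 * q \<le> 1600 / K\<^sup>2" unfolding q_def by (simp add: divide_right_mono)
    finally show ?thesis by (simp add: ennreal_leI)
  qed
qed



lemma good_AE:
  fixes Xi :: "'b \<Rightarrow> ((real ^ 'd) \<times> real) set"
  assumes P: "poisson_point_process M Xi ((lborel :: (real ^ 'd) measure) \<Otimes>\<^sub>M return borel (1::real))"
  shows "AE \<omega> in M. (\<forall>x t. (x, t) \<in> Xi \<omega> \<longrightarrow> t \<le> 1)
                 \<and> (\<forall>r::nat. finite (Xi \<omega> \<inter> (cball 0 (real r) \<times> UNIV)))"
proof -
  let ?mu = "(lborel :: (real ^ 'd) measure) \<Otimes>\<^sub>M return borel (1::real)"
  have PS: "prob_space M" using P unfolding poisson_point_process_def by blast
  interpret prob_space M by (rule PS)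
  define C :: "((real ^ 'd) \<times> real) set" where "C = UNIV \<times> {1<..}"
  have Cs: "C \<in> sets ?mu" unfolding C_def by (intro pair_measureI) auto
  have Ce: "emeasure ?mu C = 0"
    unfolding C_def
    by (subst sigma_finite_measure.emeasure_pair_measure_Times[OF sigma_finite_return]) auto
  then have Cf: "emeasure ?mu C < \<infinity>" by simp
  have Cm: "measure ?mu C = 0" using Ce by (simp add: measure_def)
  have AEC: "AE \<omega> in M. finite (Xi \<omega> \<inter> C)"
    and Cdist: "measure M {\<omega> \<in> space M. card (Xi \<omega> \<inter> C) = 0} = (measure ?mu C) ^ 0 / fact 0 * exp (- measure ?mu C)"
    using P Cs Cf unfolding poisson_point_process_def by blast+
  have "prob {\<omega> \<in> space M. card (Xi \<omega> \<inter> C) = 0} = 1" using Cdist Cm by simp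
  then have AE0: "AE \<omega> in M. \<omega> \<in> {\<omega> \<in> space M. card (Xi \<omega> \<inter> C) = 0}" by (rule AE_prob_1)
  have AE1: "AE \<omega> in M. \<forall>x t. (x, t) \<in> Xi \<omega> \<longrightarrow> t \<le> 1"
    using AEC AE0
  proof eventually_elim
    case (elim \<omega>)
    then have "Xi \<omega> \<inter> C = {}" by simp
    then show ?case unfolding C_def by force
  qed
  have AE2: "AE \<omega> in M. finite (Xi \<omega> \<inter> (cball 0 (real r) \<times> UNIV))" for r :: nat
  proof -
    have s: "cball 0 (real r) \<times> UNIV \<in> sets ?mu" by (intro pair_measureI) auto
    have "emeasure ?mu (cball 0 (real r) \<times> UNIV) = emeasure lborel (cball (0 :: real ^ 'd) (real r)) * emeasure (return borel (1::real)) UNIV"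
      by (subst sigma_finite_measure.emeasure_pair_measure_Times[OF sigma_finite_return]) auto
    then have "emeasure ?mu (cball 0 (real r) \<times> UNIV) < \<infinity>"
      using emeasure_lborel_cball_finite[of "0 :: real ^ 'd" "real r"] by simp
    then show ?thesis using P s unfolding poisson_point_process_def by blast
  qed
  then have "AE \<omega> in M. \<forall>r::nat. finite (Xi \<omega> \<inter> (cball 0 (real r) \<times> UNIV))"
    by (simp add: AE_all_countable)
  with AE1 show ?thesis by eventually_elim auto
qed

lemma exists_dyadic:
  fixes s :: real
  assumes "s > 1"
  shows "\<exists>j. 2 ^ j < s \<and> s \<le> 2 ^ Suc j"
proof -
  obtain k :: nat where k: "s < 2 ^ k" using real_arch_pow[of 2 s] by auto
  have ex: "\<exists>k. s \<le> (2::real) ^ k" using k less_imp_le by blast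
  define k0 where "k0 = (LEAST k. s \<le> (2::real) ^ k)"
  have k0: "s \<le> 2 ^ k0" unfolding k0_def by (rule LeastI_ex[OF ex])
  have "k0 \<noteq> 0"
  proof
    assume "k0 = 0"
    with k0 have "s \<le> 1" by simp
    with assms show False by simp
  qed
  then obtain j where j: "k0 = Suc j" by (cases k0) auto
  have "j < k0" using j by simp
  then have "\<not> s \<le> 2 ^ j" unfolding k0_def by (rule not_less_Least)
  then have "2 ^ j < s" by simp
  with k0 j show ?thesis by blast
qed

theorem lemma2p1:
  fixes M :: "'b measure"
    and Xi :: "'b \<Rightarrow> ((real ^ 'd) \<times> real) set"
  assumes "CARD('d) \<ge> 2"
    and "poisson_point_process M Xi (lborel \<Otimes>\<^sub>M return borel (1::real))"
  shows "\<exists>g \<in> borel_measurable M.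
           (AE \<omega> in M. greedy_S (Xi \<omega>) \<le> g \<omega>) \<and> (\<integral>\<^sup>+ \<omega>. g \<omega> \<partial>M) < \<infinity>"
proof -
  note d = assms(1) and P = assms(2)
  have PS: "prob_space M" using P unfolding poisson_point_process_def by blast
  interpret prob_space M by (rule PS)
  define E where "E = (\<lambda>j::nat. EK M Xi (2 ^ j))"
  have Es[measurable]: "E j \<in> sets M" for j
    unfolding E_def by (rule EK_sets[OF P]) simp
  define f where "f = (\<lambda>j \<omega>. ennreal (2 ^ Suc j) * indicator (E j) \<omega>)"
  define g where "g = (\<lambda>\<omega>. 1 + (\<Sum>j. f j \<omega>))"
  have fm: "f j \<in> borel_measurable M" for j unfolding f_def by measurable
  have gm: "g \<in> borel_measurable M" unfolding g_def using fm by measurable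
  have int: "(\<integral>\<^sup>+ \<omega>. g \<omega> \<partial>M) = 1 + (\<Sum>j. ennreal (2 ^ Suc j) * emeasure M (E j))"
  proof -
    have "(\<integral>\<^sup>+ \<omega>. g \<omega> \<partial>M) = (\<integral>\<^sup>+ \<omega>. 1 \<partial>M) + (\<integral>\<^sup>+ \<omega>. (\<Sum>j. f j \<omega>) \<partial>M)"
      unfolding g_def using fm by (intro nn_integral_add) auto
    also have "(\<integral>\<^sup>+ \<omega>. (\<Sum>j. f j \<omega>) \<partial>M) = (\<Sum>j. (\<integral>\<^sup>+ \<omega>. f j \<omega> \<partial>M))"
      using fm by (rule nn_integral_suminf)
    also have "\<dots> = (\<Sum>j. ennreal (2 ^ Suc j) * emeasure M (E j))"
      unfolding f_def using Es by (simp add: nn_integral_cmult_indicator)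
    finally show ?thesis by (simp add: emeasure_space_1)
  qed
  have tb: "ennreal (2 ^ Suc j) * emeasure M (E j) \<le> ennreal (3200 * (1 / 2) ^ j)" for j
  proof -
    have "emeasure M (E j) \<le> ennreal (1600 / (2 ^ j)\<^sup>2)"
      unfolding E_def by (rule EK_bound[OF P _ d]) simp
    then have "ennreal (2 ^ Suc j) * emeasure M (E j) \<le> ennreal (2 ^ Suc j) * ennreal (1600 / (2 ^ j)\<^sup>2)"
      by (rule mult_left_mono) simp
    also have "\<dots> = ennreal (2 ^ Suc j * (1600 / (2 ^ j)\<^sup>2))"
      by (subst ennreal_mult) auto
    also have "2 ^ Suc j * (1600 / (2 ^ j)\<^sup>2) = (3200 * (1 / 2) ^ j :: real)"
      by (simp add: power2_eq_square power_one_over field_simps)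
    finally show ?thesis .
  qed
  have gs: "(\<lambda>j. 3200 * (1 / 2) ^ j) sums (3200 * (1 / (1 - 1 / 2)) :: real)"
    by (intro sums_mult geometric_sums) simp
  have "(\<Sum>j. ennreal (2 ^ Suc j) * emeasure M (E j)) \<le> (\<Sum>j. ennreal (3200 * (1 / 2) ^ j))"
    using tb by (intro suminf_le) auto
  also have "\<dots> = ennreal (\<Sum>j. 3200 * (1 / 2) ^ j)"
    using gs by (intro suminf_ennreal2) (auto simp: sums_iff)
  finally have "(\<Sum>j. ennreal (2 ^ Suc j) * emeasure M (E j)) < \<infinity>"
    by (rule le_less_trans) simp
  then have fin: "(\<integral>\<^sup>+ \<omega>. g \<omega> \<partial>M) < \<infinity>" unfolding int by simp
  have AE: "AE \<omega> in M. greedy_S (Xi \<omega>) \<le> g \<omega>"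
    using good_AE[OF P] AE_space
  proof eventually_elim
    case (elim \<omega>)
    then have marks: "\<And>x t. (x, t) \<in> Xi \<omega> \<Longrightarrow> t \<le> 1"
      and finr: "\<And>r::nat. finite (Xi \<omega> \<inter> (cball 0 (real r) \<times> UNIV))"
      and sp: "\<omega> \<in> space M" by auto
    show ?case unfolding greedy_S_def
    proof (rule SUP_least)
      fix p :: "(real ^ 'd) list" assume p: "p \<in> origin_paths"
      define s where "s = path_weight (Xi \<omega>) p / path_length p"
      have g1: "1 \<le> g \<omega>" unfolding g_def by simp
      show "ennreal (path_weight (Xi \<omega>) p / path_length p) \<le> g \<omega>"
      proof (cases "s \<le> 1")
        case True
        then have "ennreal s \<le> ennreal 1" by (rule ennreal_leI)
        then have "ennreal s \<le> 1" by simp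
        from order_trans[OF this g1] show ?thesis unfolding s_def .
      next
        case False
        then obtain j where j: "2 ^ j < s" "s \<le> 2 ^ Suc j" using exists_dyadic[of s] by auto
        have "\<exists>n w. w \<in> Dset (Suc n) \<and> Suc n \<le> card (Xi \<omega> \<inter> region (2 ^ j) w)"
          using j(1) unfolding s_def by (intro deterministic[OF _ marks finr p]) auto
        then have "\<omega> \<in> E j" unfolding E_def EK_def using sp by blast
        then have fj: "f j \<omega> = ennreal (2 ^ Suc j)" unfolding f_def by simp
        have fle: "f j \<omega> \<le> (\<Sum>j. f j \<omega>)"
          using sum_le_suminf[of "\<lambda>j. f j \<omega>" "{j}"] by simp
        have sle: "ennreal s \<le> ennreal (2 ^ Suc j)" using j(2) by (rule ennreal_leI)
        have "ennreal s \<le> (\<Sum>j. f j \<omega>)" using order_trans[OF sle fle[unfolded fj]] .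
        also have "\<dots> \<le> g \<omega>" unfolding g_def by simp
        finally show ?thesis unfolding s_def .
      qed
    qed
  qed
  show ?thesis using gm AE fin by blast
qed

end
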